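(* Let $\star$ be a $t$-definer and $\{(X_\alpha,d_\alpha^\star)\}_{\alpha\in A}$ a family of $\star$-metric spaces with $d_\alpha^\star(x,y)\le 1$ for all $x,y\in X_\alpha$ and all $\alpha\in A$, and let $X=\bigoplus_{\alpha\in A}X_\alpha$ be their disjoint union. Define $d_q^\star(x,y)=d_\alpha^\star(x,y)$ if $x,y\in X_\alpha$ for some $\alpha\in A$, and $d_q^\star(x,y)=1$ otherwise. Then $(X,d_q^\star)$ is complete if and only if every $(X_\alpha,d_\alpha^\star)$ is complete.
   Context: A $t$-definer is a function $\star:[0,\infty)\times[0,\infty)\to[0,\infty)$ such that for all $a,b,c\ge 0$: $a\star b=b\star a$; $a\star(b\star c)=(a\star b)\star c$; if $a\le b$ then $a\star c\le b\star c$; $a\star 0=a$; and $\star$ is continuous in its first variable with respect to the Euclidean topology. Given a nonempty set $Y$, a $\star$-metric on $Y$ is a function $\rho:Y\times Y\to[0,\infty)$ such that for all $x,y,z\in Y$: $\rho(x,y)=0$ iff $x=y$; $\rho(x,y)=\rho(y,x)$; and $\rho(x,y)\le \rho(x,z)\star \rho(z,y)$. Under the stated bound, $d_q^\star$ is a $\star$-metric on $X$. In $(Y,\rho)$, a sequence $\{x_n\}$ is Cauchy if for every $\epsilon>0$ there is $k$ with $\rho(x_n,x_m)<\epsilon$ for all $m,n\ge k$; it converges to $x$ if for every $\epsilon>0$ there is $k$ with $\rho(x,x_n)<\epsilon$ for $n\ge k$; $(Y,\rho)$ is complete if every Cauchy sequence converges to a point of $Y$. *)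

theory Defs
  imports "HOL-Analysis.Analysis"
begin

text \<open>A t-definer: a binary operation on [0,\<infinity>) (represented as a real function,
  only its values on nonnegative arguments matter).\<close>
definition t_definer :: "(real \<Rightarrow> real \<Rightarrow> real) \<Rightarrow> bool" where
  "t_definer s \<longleftrightarrow>
     (\<forall>a b. 0 \<le> a \<longrightarrow> 0 \<le> b \<longrightarrow> 0 \<le> s a b) \<and>
     (\<forall>a b. 0 \<le> a \<longrightarrow> 0 \<le> b \<longrightarrow> s a b = s b a) \<and>
     (\<forall>a b c. 0 \<le> a \<longrightarrow> 0 \<le> b \<longrightarrow> 0 \<le> c \<longrightarrow> s a (s b c) = s (s a b) c) \<and>
     (\<forall>a b c. 0 \<le> a \<longrightarrow> 0 \<le> b \<longrightarrow> 0 \<le> c \<longrightarrow> a \<le> b \<longrightarrow> s a c \<le> s b c) \<and>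
     (\<forall>a. 0 \<le> a \<longrightarrow> s a 0 = a) \<and>
     (\<forall>c. 0 \<le> c \<longrightarrow> continuous_on {0..} (\<lambda>a. s a c))"

definition star_metric :: "(real \<Rightarrow> real \<Rightarrow> real) \<Rightarrow> 'a set \<Rightarrow> ('a \<Rightarrow> 'a \<Rightarrow> real) \<Rightarrow> bool" where
  "star_metric s Y \<rho> \<longleftrightarrow> Y \<noteq> {} \<and>
     (\<forall>x\<in>Y. \<forall>y\<in>Y. 0 \<le> \<rho> x y) \<and>
     (\<forall>x\<in>Y. \<forall>y\<in>Y. \<rho> x y = 0 \<longleftrightarrow> x = y) \<and>
     (\<forall>x\<in>Y. \<forall>y\<in>Y. \<rho> x y = \<rho> y x) \<and>
     (\<forall>x\<in>Y. \<forall>y\<in>Y. \<forall>z\<in>Y. \<rho> x y \<le> s (\<rho> x z) (\<rho> z y))"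

definition sm_cauchy :: "('a \<Rightarrow> 'a \<Rightarrow> real) \<Rightarrow> (nat \<Rightarrow> 'a) \<Rightarrow> bool" where
  "sm_cauchy \<rho> u \<longleftrightarrow> (\<forall>\<epsilon>>0. \<exists>k. \<forall>m\<ge>k. \<forall>n\<ge>k. \<rho> (u n) (u m) < \<epsilon>)"

definition sm_converges :: "('a \<Rightarrow> 'a \<Rightarrow> real) \<Rightarrow> (nat \<Rightarrow> 'a) \<Rightarrow> 'a \<Rightarrow> bool" where
  "sm_converges \<rho> u x \<longleftrightarrow> (\<forall>\<epsilon>>0. \<exists>k. \<forall>n\<ge>k. \<rho> x (u n) < \<epsilon>)"

definition sm_complete :: "'a set \<Rightarrow> ('a \<Rightarrow> 'a \<Rightarrow> real) \<Rightarrow> bool" where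
  "sm_complete Y \<rho> \<longleftrightarrow>
     (\<forall>u. (\<forall>n. u n \<in> Y) \<longrightarrow> sm_cauchy \<rho> u \<longrightarrow> (\<exists>x\<in>Y. sm_converges \<rho> u x))"

text \<open>Metric on the disjoint union (Sigma A X) of the family.\<close>
definition dq :: "('i \<Rightarrow> 'a \<Rightarrow> 'a \<Rightarrow> real) \<Rightarrow> ('i \<times> 'a) \<Rightarrow> ('i \<times> 'a) \<Rightarrow> real" where
  "dq d p q = (if fst p = fst q then d (fst p) (snd p) (snd q) else 1)"

end

theory Submission
  imports Defs
begin

theorem theorem4p13:
  fixes s :: "real \<Rightarrow> real \<Rightarrow> real"
    and A :: "'i set" and X :: "'i \<Rightarrow> 'a set" and d :: "'i \<Rightarrow> 'a \<Rightarrow> 'a \<Rightarrow> real"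
  assumes "t_definer s"
    and "\<And>\<alpha>. \<alpha> \<in> A \<Longrightarrow> star_metric s (X \<alpha>) (d \<alpha>)"
    and "\<And>\<alpha> x y. \<alpha> \<in> A \<Longrightarrow> x \<in> X \<alpha> \<Longrightarrow> y \<in> X \<alpha> \<Longrightarrow> d \<alpha> x y \<le> 1"
  shows "sm_complete (Sigma A X) (dq d) \<longleftrightarrow> (\<forall>\<alpha>\<in>A. sm_complete (X \<alpha>) (d \<alpha>))"
proof
  assume C: "sm_complete (Sigma A X) (dq d)"
  show "\<forall>\<alpha>\<in>A. sm_complete (X \<alpha>) (d \<alpha>)"
  proof (intro ballI, unfold sm_complete_def, intro allI impI)
    fix \<alpha> u assume a: "\<alpha> \<in> A" and u: "\<forall>n. u n \<in> X \<alpha>" and cu: "sm_cauchy (d \<alpha>) u"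
    let ?v = "\<lambda>n. (\<alpha>, u n)"
    have v1: "\<forall>n. ?v n \<in> Sigma A X" using a u by auto
    have v2: "sm_cauchy (dq d) ?v" using cu by (simp add: sm_cauchy_def dq_def)
    have "\<exists>p\<in>Sigma A X. sm_converges (dq d) ?v p"
      using spec[OF C[unfolded sm_complete_def], of ?v] v1 v2 by blast
    then obtain p where p: "p \<in> Sigma A X" and cv: "sm_converges (dq d) ?v p" by blast
    obtain k where k: "\<forall>n\<ge>k. dq d p (?v n) < 1" using cv[unfolded sm_converges_def, rule_format, of 1] by auto
    have "fst p = \<alpha>" using k[rule_format, of k] by (auto simp: dq_def split: if_splits)
    hence "sm_converges (d \<alpha>) u (snd p)" using cv by (auto simp: sm_converges_def dq_def)
    moreover have "snd p \<in> X \<alpha>" using p \<open>fst p = \<alpha>\<close> by auto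
    ultimately show "\<exists>x\<in>X \<alpha>. sm_converges (d \<alpha>) u x" by blast
  qed
next
  assume C: "\<forall>\<alpha>\<in>A. sm_complete (X \<alpha>) (d \<alpha>)"
  show "sm_complete (Sigma A X) (dq d)"
  proof (unfold sm_complete_def, intro allI impI)
    fix v assume v: "\<forall>n. v n \<in> Sigma A X" and cv: "sm_cauchy (dq d) v"
    obtain k where k: "\<forall>m\<ge>k. \<forall>n\<ge>k. dq d (v n) (v m) < 1" using cv[unfolded sm_cauchy_def, rule_format, of 1] by auto
    define \<alpha> where "\<alpha> = fst (v k)"
    have fa: "fst (v n) = \<alpha>" if "n \<ge> k" for n
      using k[rule_format, of k n] that by (auto simp: dq_def \<alpha>_def split: if_splits)
    have a: "\<alpha> \<in> A" using v[rule_format, of k] unfolding \<alpha>_def by (cases "v k") auto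
    define u where "u n = snd (v (n + k))" for n
    have u: "\<forall>n. u n \<in> X \<alpha>"
    proof
      fix n
      have "v (n+k) \<in> Sigma A X" using v by blast
      moreover have "fst (v (n+k)) = \<alpha>" using fa by simp
      ultimately show "u n \<in> X \<alpha>" unfolding u_def by (cases "v (n+k)") auto
    qed
    have cu: "sm_cauchy (d \<alpha>) u" unfolding sm_cauchy_def
    proof (intro allI impI)
      fix e :: real assume "e > 0"
      then obtain j where j: "\<forall>m\<ge>j. \<forall>n\<ge>j. dq d (v n) (v m) < e" using cv unfolding sm_cauchy_def by blast
      show "\<exists>j. \<forall>m\<ge>j. \<forall>n\<ge>j. d \<alpha> (u n) (u m) < e"
      proof (intro exI allI impI)
        fix m n assume "m \<ge> j" "n \<ge> j"
        then have "dq d (v (n+k)) (v (m+k)) < e" using j by simp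
        thus "d \<alpha> (u n) (u m) < e" using fa[of "n+k"] fa[of "m+k"] by (simp add: dq_def u_def)
      qed
    qed
    have "sm_complete (X \<alpha>) (d \<alpha>)" using C a by blast
    then have "\<exists>x\<in>X \<alpha>. sm_converges (d \<alpha>) u x" using u cu unfolding sm_complete_def by blast
    then obtain x where x: "x \<in> X \<alpha>" and cx: "sm_converges (d \<alpha>) u x" by blast
    have "sm_converges (dq d) v (\<alpha>, x)" unfolding sm_converges_def
    proof (intro allI impI)
      fix e :: real assume "e > 0"
      then obtain j where j: "\<forall>n\<ge>j. d \<alpha> x (u n) < e" using cx unfolding sm_converges_def by blast
      show "\<exists>j. \<forall>n\<ge>j. dq d (\<alpha>, x) (v n) < e"
      proof (intro exI allI impI)
        fix n assume n: "n \<ge> j + k"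
        then have "d \<alpha> x (u (n - k)) < e" using j by simp
        thus "dq d (\<alpha>, x) (v n) < e" using fa[of n] n by (simp add: dq_def u_def)
      qed
    qed
    thus "\<exists>p\<in>Sigma A X. sm_converges (dq d) v p" using a x by blast
  qed
qed

end
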